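(* In the setting of the procedure below, the total number of arithmetic operations (divisions, multiplications and subtractions) needed to compute $K^{(N)}_{CC}$ is $O\bigl(\sum_{m=1}^M |R^*_m|\,|C^*_m|^2\bigr)$. In particular, for the $n$-cycle model ($\Delta=\{1,\dots,n\}$, $n\ge 4$, maximal cliques $\{1,2\},\{2,3\},\dots,\{n-1,n\},\{n,1\}$) and any maximal clique $C$, there is a chordal extension and a perfect sequence with $C\subseteq C^*_1$ for which $M=n-2$, $|C^*_m|=3$ and $|R^*_m|=1$ for all $m$, so $((K^{-1})_{CC})^{-1}$ is computed with $O(n)$ arithmetic operations. The procedure: given a graph $\mathcal{G}=(\Delta,E)$, $K\in\mathcal{M}^+(\mathcal{G})$, a maximal clique $C$ of $\mathcal{G}$, a chordal extension $\mathcal{G}^*$ of $\mathcal{G}$ with perfect sequence of maximal cliques $C^*_1,\dots,C^*_M$ satisfying $C\subseteq C^*_1$, $S^*_m:=C^*_m\cap(C^*_1\cup\dots\cup C^*_{m-1})$, $R^*_1:=C^*_1\setminus C$, $R^*_m:=C^*_m\setminus S^*_m$ ($m\ge2$); enumerate $\Delta\setminus C$ as $\delta_1,\dots,\delta_N$ listing $R^*_M$ first, then $R^*_{M-1}$, …, finally $R^*_1$; set $K^{(0)}=K$ and for $i=1,\dots,N$, with $\delta=\delta_i\in R^*_m$ and $Q=C^*_m\setminus\{\delta_1,\dots,\delta_i\}$, replace the $Q\times Q$ block by $K^{(i-1)}_{QQ}-(k^{(i-1)}_{\delta\delta})^{-1}K^{(i-1)}_{Q\delta}K^{(i-1)}_{\delta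 Q}$.
   Context: For a graph $\mathcal{G}=(\Delta,E)$, $\mathcal{M}^+(\mathcal{G})$ denotes the set of $|\Delta|\times|\Delta|$ real symmetric positive definite matrices $K=(k_{ij})$ with $k_{ij}=0$ whenever $i\neq j$ and $\{i,j\}\notin E$. $A_{\Delta_1\Delta_2}$ denotes the submatrix with rows in $\Delta_1$ and columns in $\Delta_2$. A chordal extension of $\mathcal{G}$ is a chordal graph on $\Delta$ containing all edges of $\mathcal{G}$. A sequence $C^*_1,\dots,C^*_M$ of all maximal cliques of a chordal graph is perfect if for each $m\ge2$ some $m'<m$ has $C^*_{m'}\supseteq C^*_m\cap(C^*_1\cup\dots\cup C^*_{m-1})$. *)

theory Defs
  imports Complex_Main
begin

definition is_graph :: "nat set \<Rightarrow> nat set set \<Rightarrow> bool" where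
  "is_graph V E \<longleftrightarrow> finite V \<and>
     (\<forall>e\<in>E. \<exists>x y. x \<noteq> y \<and> x \<in> V \<and> y \<in> V \<and> e = {x, y})"

definition is_clique :: "nat set \<Rightarrow> nat set set \<Rightarrow> nat set \<Rightarrow> bool" where
  "is_clique V E S \<longleftrightarrow> S \<subseteq> V \<and> (\<forall>x\<in>S. \<forall>y\<in>S. x \<noteq> y \<longrightarrow> {x, y} \<in> E)"

definition maximal_clique :: "nat set \<Rightarrow> nat set set \<Rightarrow> nat set \<Rightarrow> bool" where
  "maximal_clique V E S \<longleftrightarrow> is_clique V E S \<and> (\<forall>T. is_clique V E T \<and> S \<subseteq> T \<longrightarrow> T = S)"

definition is_cycle :: "nat set \<Rightarrow> nat set set \<Rightarrow> nat list \<Rightarrow> bool" where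
  "is_cycle V E vs \<longleftrightarrow> distinct vs \<and> length vs \<ge> 3 \<and> set vs \<subseteq> V \<and>
     (\<forall>i < length vs. {vs ! i, vs ! ((i + 1) mod length vs)} \<in> E)"

definition chordal :: "nat set \<Rightarrow> nat set set \<Rightarrow> bool" where
  "chordal V E \<longleftrightarrow> (\<forall>vs. is_cycle V E vs \<and> length vs \<ge> 4 \<longrightarrow>
     (\<exists>i j. i < length vs \<and> j < length vs \<and> i \<noteq> j \<and>
            j \<noteq> (i + 1) mod length vs \<and> i \<noteq> (j + 1) mod length vs \<and>
            {vs ! i, vs ! j} \<in> E))"

definition chordal_extension :: "nat set \<Rightarrow> nat set set \<Rightarrow> nat set set \<Rightarrow> bool" where
  "chordal_extension V E E' \<longleftrightarrow> is_graph V E' \<and> E \<subseteq> E' \<and> chordal V E'"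

definition perfect_sequence :: "nat set \<Rightarrow> nat set set \<Rightarrow> (nat \<Rightarrow> nat set) \<Rightarrow> nat \<Rightarrow> bool" where
  "perfect_sequence V E Cs M \<longleftrightarrow>
     inj_on Cs {1..M} \<and>
     Cs ` {1..M} = {S. maximal_clique V E S} \<and>
     (\<forall>m \<in> {2..M}. \<exists>m' \<in> {1..<m}. Cs m' \<supseteq> Cs m \<inter> (\<Union>j\<in>{1..<m}. Cs j))"

definition sep_set :: "(nat \<Rightarrow> nat set) \<Rightarrow> nat \<Rightarrow> nat set" where
  "sep_set Cs m = Cs m \<inter> (\<Union>j\<in>{1..<m}. Cs j)"

definition res_set :: "(nat \<Rightarrow> nat set) \<Rightarrow> nat set \<Rightarrow> nat \<Rightarrow> nat set" where
  "res_set Cs C m = (if m = 1 then Cs 1 - C else Cs m - sep_set Cs m)"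

text \<open>Matrices indexed by the vertex set: functions nat \<Rightarrow> nat \<Rightarrow> real, only the
  entries with both indices in V matter.\<close>
definition pos_def_on :: "nat set \<Rightarrow> (nat \<Rightarrow> nat \<Rightarrow> real) \<Rightarrow> bool" where
  "pos_def_on V K \<longleftrightarrow> (\<forall>x\<in>V. \<forall>y\<in>V. K x y = K y x) \<and>
     (\<forall>z :: nat \<Rightarrow> real. (\<exists>i\<in>V. z i \<noteq> 0) \<longrightarrow> (\<Sum>i\<in>V. \<Sum>j\<in>V. z i * K i j * z j) > 0)"

definition in_M_plus :: "nat set \<Rightarrow> nat set set \<Rightarrow> (nat \<Rightarrow> nat \<Rightarrow> real) \<Rightarrow> bool" where
  "in_M_plus V E K \<longleftrightarrow> pos_def_on V K \<and>
     (\<forall>x\<in>V. \<forall>y\<in>V. x \<noteq> y \<and> {x, y} \<notin> E \<longrightarrow> K x y = 0)"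

definition blk :: "(nat \<Rightarrow> nat set) \<Rightarrow> nat set \<Rightarrow> nat \<Rightarrow> nat \<Rightarrow> nat" where
  "blk Cs C M d = (THE m. m \<in> {1..M} \<and> d \<in> res_set Cs C m)"

definition admissible_enum :: "nat set \<Rightarrow> nat set \<Rightarrow> (nat \<Rightarrow> nat set) \<Rightarrow> nat \<Rightarrow> nat list \<Rightarrow> bool" where
  "admissible_enum V C Cs M ds \<longleftrightarrow> distinct ds \<and> set ds = V - C \<and>
     (\<forall>i j. i < j \<and> j < length ds \<longrightarrow> blk Cs C M (ds ! j) \<le> blk Cs C M (ds ! i))"

definition elim_step :: "(nat \<Rightarrow> nat \<Rightarrow> real) \<Rightarrow> nat \<Rightarrow> nat set \<Rightarrow> (nat \<Rightarrow> nat \<Rightarrow> real)" where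
  "elim_step A d Q = (\<lambda>x y. if x \<in> Q \<and> y \<in> Q
       then A x y - (inverse (A d d) * A x d) * A d y else A x y)"

text \<open>Arithmetic operations of one update with |Q| = q: one division (k_dd^{-1}),
  q multiplications (k_dd^{-1} K_Qd), q^2 multiplications (outer product with K_dQ),
  q^2 subtractions.\<close>
definition step_ops :: "nat set \<Rightarrow> nat" where
  "step_ops Q = 1 + (card Q + card Q ^ 2) + card Q ^ 2"

text \<open>Run the procedure on the remaining enumeration ds, with D the set of already
  eliminated vertices; returns the final matrix and the number of operations.\<close>
fun elim_proc :: "(nat \<Rightarrow> nat set) \<Rightarrow> nat set \<Rightarrow> nat \<Rightarrow> nat list \<Rightarrow> nat set \<Rightarrow>
    (nat \<Rightarrow> nat \<Rightarrow> real) \<Rightarrow> (nat \<Rightarrow> nat \<Rightarrow> real) \<times> nat" where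
  "elim_proc Cs C M [] D A = (A, 0)"
| "elim_proc Cs C M (d # ds) D A =
     (let Q = Cs (blk Cs C M d) - insert d D;
          r = elim_proc Cs C M ds (insert d D) (elim_step A d Q)
      in (fst r, step_ops Q + snd r))"

definition final_matrix :: "(nat \<Rightarrow> nat set) \<Rightarrow> nat set \<Rightarrow> nat \<Rightarrow> nat list \<Rightarrow>
    (nat \<Rightarrow> nat \<Rightarrow> real) \<Rightarrow> (nat \<Rightarrow> nat \<Rightarrow> real)" where
  "final_matrix Cs C M ds K = fst (elim_proc Cs C M ds {} K)"

definition op_count :: "(nat \<Rightarrow> nat set) \<Rightarrow> nat set \<Rightarrow> nat \<Rightarrow> nat list \<Rightarrow>
    (nat \<Rightarrow> nat \<Rightarrow> real) \<Rightarrow> nat" where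
  "op_count Cs C M ds K = snd (elim_proc Cs C M ds {} K)"

definition procedure_setting :: "nat set \<Rightarrow> nat set set \<Rightarrow> (nat \<Rightarrow> nat \<Rightarrow> real) \<Rightarrow> nat set \<Rightarrow>
    nat set set \<Rightarrow> (nat \<Rightarrow> nat set) \<Rightarrow> nat \<Rightarrow> nat list \<Rightarrow> bool" where
  "procedure_setting V E K C E' Cs M ds \<longleftrightarrow>
     is_graph V E \<and> in_M_plus V E K \<and> maximal_clique V E C \<and>
     chordal_extension V E E' \<and> perfect_sequence V E' Cs M \<and> C \<subseteq> Cs 1 \<and>
     admissible_enum V C Cs M ds"

definition cycle_edges :: "nat \<Rightarrow> nat set set" where
  "cycle_edges n = {{i, i + 1} | i. 1 \<le> i \<and> i < n} \<union> {{n, 1}}"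

end

theory Submission
  imports Defs
begin


lemma step_ops_mono: "card Q \<le> card S \<Longrightarrow> step_ops Q \<le> step_ops S"
  unfolding step_ops_def by (intro add_mono power_mono) auto

lemma elim_ops:
  "(\<forall>d\<in>set ds. finite (Cs (blk Cs C M d))) \<Longrightarrow>
   snd (elim_proc Cs C M ds D A) \<le> (\<Sum>d\<leftarrow>ds. step_ops (Cs (blk Cs C M d)))"
proof (induction ds arbitrary: D A)
  case Nil then show ?case by simp
next
  case (Cons d ds)
  let ?Q = "Cs (blk Cs C M d) - insert d D"
  have "card ?Q \<le> card (Cs (blk Cs C M d))"
    using Cons.prems by (intro card_mono) auto
  hence "step_ops ?Q \<le> step_ops (Cs (blk Cs C M d))" by (rule step_ops_mono)
  moreover have "snd (elim_proc Cs C M ds (insert d D) (elim_step A d ?Q)) \<le> (\<Sum>d\<leftarrow>ds. step_ops (Cs (blk Cs C M d)))"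
    using Cons by auto
  ultimately show ?case by (simp add: Let_def)
qed

lemma exists_max_clique:
  assumes "finite V" "d \<in> V"
  shows "\<exists>S. maximal_clique V E S \<and> d \<in> S"
proof -
  let ?F = "{S. is_clique V E S \<and> d \<in> S}"
  have fin: "finite ?F"
    by (rule finite_subset[of _ "Pow V"]) (use assms in \<open>auto simp: is_clique_def\<close>)
  have "{d} \<in> ?F" using assms by (auto simp: is_clique_def)
  hence ne: "card ` ?F \<noteq> {}" by auto
  have "Max (card ` ?F) \<in> card ` ?F" using fin ne by (intro Max_in) auto
  then obtain S where S: "S \<in> ?F" "card S = Max (card ` ?F)" by auto
  have "maximal_clique V E S"
    unfolding maximal_clique_def
  proof (intro conjI allI impI)
    show "is_clique V E S" using S by auto
    fix T assume T: "is_clique V E T \<and> S \<subseteq> T"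
    hence "T \<in> ?F" using S by auto
    hence "card T \<le> card S" using S fin by (simp add: Max_ge)
    moreover have "finite T" using T assms(1) by (auto simp: is_clique_def intro: finite_subset)
    ultimately show "T = S" using T by (metis card_seteq)
  qed
  thus ?thesis using S by auto
qed

lemma blk_props:
  assumes fin: "finite V" and ps: "perfect_sequence V E' Cs M" and cl: "\<forall>S. maximal_clique V E' S \<longrightarrow> S \<subseteq> V"
    and d: "d \<in> V - C"
  shows "blk Cs C M d \<in> {1..M} \<and> d \<in> res_set Cs C (blk Cs C M d)"
proof -
  obtain S where S: "maximal_clique V E' S" "d \<in> S" using exists_max_clique[OF fin] d by blast
  then obtain m0 where m0: "m0 \<in> {1..M}" "d \<in> Cs m0" using ps unfolding perfect_sequence_def
    by (metis (mono_tags, lifting) imageE mem_Collect_eq)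
  define m where "m = (LEAST m. m \<in> {1..M} \<and> d \<in> Cs m)"
  have m: "m \<in> {1..M} \<and> d \<in> Cs m" unfolding m_def by (rule LeastI[of _ m0]) (use m0 in auto)
  have mle: "\<And>j. j \<in> {1..M} \<Longrightarrow> d \<in> Cs j \<Longrightarrow> m \<le> j" unfolding m_def by (rule Least_le) auto
  have res: "d \<in> res_set Cs C m"
  proof (cases "m = 1")
    case True thus ?thesis using m d by (auto simp: res_set_def)
  next
    case False
    have "d \<notin> sep_set Cs m"
    proof
      assume "d \<in> sep_set Cs m"
      then obtain j where "j \<in> {1..<m}" "d \<in> Cs j" by (auto simp: sep_set_def)
      moreover have "j \<in> {1..M}" using \<open>j \<in> {1..<m}\<close> m by auto
      ultimately show False using mle by fastforce
    qed
    thus ?thesis using False m by (auto simp: res_set_def)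
  qed
  have uniq: "\<And>k. k \<in> {1..M} \<and> d \<in> res_set Cs C k \<Longrightarrow> k = m"
  proof -
    fix k assume k: "k \<in> {1..M} \<and> d \<in> res_set Cs C k"
    have gen: "\<And>k1 k2. k1 \<in> {1..M} \<Longrightarrow> k2 \<in> {1..M} \<Longrightarrow> d \<in> res_set Cs C k1 \<Longrightarrow> d \<in> res_set Cs C k2 \<Longrightarrow> \<not> k1 < k2"
    proof
      fix k1 k2 assume h: "k1 \<in> {1..M}" "k2 \<in> {1..M}" "d \<in> res_set Cs C k1" "d \<in> res_set Cs C k2" "k1 < k2"
      have "d \<in> Cs k1" using h(3) by (auto simp: res_set_def split: if_splits)
      hence "d \<in> sep_set Cs k2" using h(4,5,1) by (auto simp: res_set_def sep_set_def split: if_splits)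
      thus False using h(4,5,1) by (auto simp: res_set_def split: if_splits)
    qed
    show "k = m" using gen[of k m] gen[of m k] k m res by fastforce
  qed
  have "blk Cs C M d = m" unfolding blk_def
    by (rule the_equality) (use m res uniq in auto)
  thus ?thesis using m res by simp
qed

lemma part1:
  assumes "procedure_setting V E K C E' Cs M ds"
  shows "real (op_count Cs C M ds K) \<le> 4 * (\<Sum>m = 1..M. real (card (res_set Cs C m) * card (Cs m) ^ 2))"
proof -
  have fin: "finite V" and ps: "perfect_sequence V E' Cs M" and ae: "admissible_enum V C Cs M ds"
    and ce: "chordal_extension V E E' "
    using assms by (auto simp: procedure_setting_def is_graph_def)
  have cl: "\<forall>S. maximal_clique V E' S \<longrightarrow> S \<subseteq> V" by (auto simp: maximal_clique_def is_clique_def)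
  have dist: "distinct ds" and sds: "set ds = V - C" using ae by (auto simp: admissible_enum_def)
  let ?b = "blk Cs C M"
  have bp: "\<And>d. d \<in> set ds \<Longrightarrow> ?b d \<in> {1..M} \<and> d \<in> res_set Cs C (?b d)"
    using blk_props[OF fin ps cl] sds by blast
  have csV: "\<And>m. m \<in> {1..M} \<Longrightarrow> Cs m \<subseteq> V"
  proof -
    fix m assume "m \<in> {1..M}"
    hence "Cs m \<in> Cs ` {1..M}" by blast
    hence "maximal_clique V E' (Cs m)" using ps unfolding perfect_sequence_def by simp
    thus "Cs m \<subseteq> V" using cl by blast
  qed
  have finCs: "\<And>m. m \<in> {1..M} \<Longrightarrow> finite (Cs m)" using csV fin by (meson finite_subset)
  have resCs: "\<And>m. res_set Cs C m \<subseteq> Cs m" by (auto simp: res_set_def)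
  have "op_count Cs C M ds K \<le> (\<Sum>d\<leftarrow>ds. step_ops (Cs (?b d)))"
    unfolding op_count_def using bp finCs by (intro elim_ops) auto
  also have "\<dots> = (\<Sum>d\<in>set ds. step_ops (Cs (?b d)))" using dist by (simp add: sum_list_distinct_conv_sum_set)
  also have "\<dots> \<le> (\<Sum>d\<in>set ds. 4 * card (Cs (?b d)) ^ 2)"
  proof (rule sum_mono)
    fix d assume "d \<in> set ds"
    hence "d \<in> Cs (?b d)" "finite (Cs (?b d))" using bp[of d] finCs resCs by auto
    hence "card (Cs (?b d)) \<ge> 1" by (metis card_0_eq empty_iff less_one not_le)
    then obtain c where c: "card (Cs (?b d)) = c + 1" by (metis le_add_diff_inverse2)
    show "step_ops (Cs (?b d)) \<le> 4 * card (Cs (?b d)) ^ 2"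
      unfolding step_ops_def c by (simp add: power2_eq_square algebra_simps)
  qed
  also have "\<dots> = (\<Sum>m\<in>{1..M}. (\<Sum>d\<in>{x. x \<in> set ds \<and> ?b x = m}. 4 * card (Cs (?b d)) ^ 2))"
  proof (rule sum.group[symmetric])
    show "?b ` set ds \<subseteq> {1..M}" using bp by blast
  qed auto
  also have "\<dots> = (\<Sum>m\<in>{1..M}. card {x. x \<in> set ds \<and> ?b x = m} * (4 * card (Cs m) ^ 2))"
  proof (rule sum.cong[OF refl])
    fix m
    have "(\<Sum>d\<in>{x. x \<in> set ds \<and> ?b x = m}. 4 * card (Cs (?b d)) ^ 2) = (\<Sum>d\<in>{x. x \<in> set ds \<and> ?b x = m}. 4 * card (Cs m) ^ 2)"
      by (rule sum.cong) auto
    thus "(\<Sum>d\<in>{x. x \<in> set ds \<and> ?b x = m}. 4 * card (Cs (?b d)) ^ 2) = card {x. x \<in> set ds \<and> ?b x = m} * (4 * card (Cs m) ^ 2)"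
      by simp
  qed
  also have "\<dots> \<le> (\<Sum>m\<in>{1..M}. card (res_set Cs C m) * (4 * card (Cs m) ^ 2))"
  proof (rule sum_mono)
    fix m assume m: "m \<in> {1..M}"
    have "{x. x \<in> set ds \<and> ?b x = m} \<subseteq> res_set Cs C m" using bp by auto
    hence "card {x. x \<in> set ds \<and> ?b x = m} \<le> card (res_set Cs C m)"
      using finCs[OF m] resCs by (meson card_mono finite_subset)
    thus "card {x. x \<in> set ds \<and> ?b x = m} * (4 * card (Cs m) ^ 2) \<le> card (res_set Cs C m) * (4 * card (Cs m) ^ 2)"
      by simp
  qed
  also have "\<dots> = 4 * (\<Sum>m\<in>{1..M}. card (res_set Cs C m) * card (Cs m) ^ 2)"
    by (simp add: sum_distrib_left mult.left_commute)
  finally have "op_count Cs C M ds K \<le> 4 * (\<Sum>m\<in>{1..M}. card (res_set Cs C m) * card (Cs m) ^ 2)" .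
  hence "real (op_count Cs C M ds K) \<le> real (4 * (\<Sum>m\<in>{1..M}. card (res_set Cs C m) * card (Cs m) ^ 2))"
    by (rule of_nat_mono)
  thus ?thesis by (simp add: of_nat_sum)
qed



definition cp :: "nat \<Rightarrow> nat \<Rightarrow> nat \<Rightarrow> nat" where
  "cp n a k = (if a + k \<le> n then a + k else a + k - n)"
definition cphi :: "nat \<Rightarrow> nat \<Rightarrow> nat \<Rightarrow> nat" where
  "cphi n a v = (if a \<le> v then v - a else v + n - a)"

lemma cp_range: "1 \<le> a \<Longrightarrow> a \<le> n \<Longrightarrow> k < n \<Longrightarrow> cp n a k \<in> {1..n}"
  by (auto simp: cp_def)
lemma cphi_cp: "1 \<le> a \<Longrightarrow> a \<le> n \<Longrightarrow> k < n \<Longrightarrow> cphi n a (cp n a k) = k"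
  by (auto simp: cp_def cphi_def)
lemma cp_cphi: "1 \<le> a \<Longrightarrow> a \<le> n \<Longrightarrow> v \<in> {1..n} \<Longrightarrow> cp n a (cphi n a v) = v"
  by (auto simp: cp_def cphi_def)
lemma cphi_lt: "1 \<le> a \<Longrightarrow> a \<le> n \<Longrightarrow> v \<in> {1..n} \<Longrightarrow> cphi n a v < n"
  by (auto simp: cphi_def)
lemma cphi_zero: "1 \<le> a \<Longrightarrow> a \<le> n \<Longrightarrow> v \<in> {1..n} \<Longrightarrow> cphi n a v = 0 \<longleftrightarrow> v = a"
  by (auto simp: cphi_def)
lemma cp_0: "a \<le> n \<Longrightarrow> cp n a 0 = a" "1 \<le> a \<Longrightarrow> a \<le> n \<Longrightarrow> cp n a n = a"
  by (auto simp: cp_def)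

lemma cyc_edge:
  assumes "1 \<le> a" "a \<le> n" "{x, y} \<in> cycle_edges n"
  shows "x \<in> {1..n} \<and> y \<in> {1..n} \<and> (cphi n a y = cphi n a x + 1 \<or> cphi n a x = cphi n a y + 1 \<or>
     (cphi n a x = 0 \<and> cphi n a y = n - 1) \<or> (cphi n a y = 0 \<and> cphi n a x = n - 1))"
proof -
  from assms(3) consider i where "1 \<le> i" "i < n" "{x, y} = {i, i + 1}" | "{x, y} = {n, 1}"
    unfolding cycle_edges_def by blast
  thus ?thesis
  proof cases
    case 1 thus ?thesis using assms(1,2) by (auto simp: cphi_def doubleton_eq_iff)
  next
    case 2 thus ?thesis using assms(1,2) by (auto simp: cphi_def doubleton_eq_iff)
  qed
qed

lemma cyc_edge_cp:
  assumes "1 \<le> a" "a \<le> n" "k + 1 < n"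
  shows "{cp n a k, cp n a (k + 1)} \<in> cycle_edges n"
proof -
  consider "a + k + 1 \<le> n" | "a + k = n" | "a + k > n" by linarith
  thus ?thesis
  proof cases
    case 1
    hence "{cp n a k, cp n a (k + 1)} = {a + k, a + k + 1}" by (simp add: cp_def)
    moreover have "1 \<le> a + k \<and> a + k < n" using 1 assms by simp
    ultimately show ?thesis unfolding cycle_edges_def by blast
  next
    case 2
    hence "{cp n a k, cp n a (k + 1)} = {n, 1}" by (simp add: cp_def)
    thus ?thesis unfolding cycle_edges_def by blast
  next
    case 3
    hence "{cp n a k, cp n a (k + 1)} = {a + k - n, a + k - n + 1}" by (auto simp: cp_def)
    moreover have "1 \<le> a + k - n \<and> a + k - n < n" using 3 assms by linarith
    ultimately show ?thesis unfolding cycle_edges_def by blast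
  qed
qed

definition fanE :: "nat \<Rightarrow> nat \<Rightarrow> nat set set" where
  "fanE n a = cycle_edges n \<union> {{a, v} | v. v \<in> {1..n} \<and> v \<noteq> a}"

definition fanCs :: "nat \<Rightarrow> nat \<Rightarrow> nat \<Rightarrow> nat set" where
  "fanCs n a m = {a, cp n a m, cp n a (m + 1)}"

lemma fan_edge:
  assumes "1 \<le> a" "a \<le> n" "{x, y} \<in> fanE n a" "x \<noteq> a" "y \<noteq> a"
  shows "x \<in> {1..n} \<and> y \<in> {1..n} \<and> (cphi n a y = cphi n a x + 1 \<or> cphi n a x = cphi n a y + 1)"
proof -
  have "{x, y} \<in> cycle_edges n" using assms(3-5) unfolding fanE_def by (auto simp: doubleton_eq_iff)
  from cyc_edge[OF assms(1,2) this] show ?thesis using cphi_zero[OF assms(1,2)] assms(4,5) by auto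
qed

lemma clique_phi:
  assumes "1 \<le> a" "a \<le> n" "is_clique {1..n} (fanE n a) S" "x \<in> S" "y \<in> S" "x \<noteq> a" "y \<noteq> a" "x \<noteq> y"
  shows "cphi n a y = cphi n a x + 1 \<or> cphi n a x = cphi n a y + 1"
  using fan_edge[OF assms(1,2) _ assms(6,7)] assms(3-5,8) unfolding is_clique_def by blast



lemma fanCs_phi:
  assumes "1 \<le> a" "a \<le> n" "m + 1 < n"
  shows "cphi n a ` fanCs n a m = {0, m, m + 1}"
proof -
  have "cphi n a a = 0" by (simp add: cphi_def)
  thus ?thesis using assms cphi_cp[OF assms(1,2), of m] cphi_cp[OF assms(1,2), of "m+1"]
    by (simp add: fanCs_def)
qed

lemma fanCs_sub:
  assumes "1 \<le> a" "a \<le> n" "m + 1 < n"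
  shows "fanCs n a m \<subseteq> {1..n}"
  using assms cp_range[OF assms(1,2)] by (auto simp: fanCs_def)

lemma fanCs_clique:
  assumes "1 \<le> a" "a \<le> n" "1 \<le> m" "m + 1 < n"
  shows "is_clique {1..n} (fanE n a) (fanCs n a m)"
proof -
  have r: "cp n a m \<in> {1..n}" "cp n a (m+1) \<in> {1..n}" using cp_range[OF assms(1,2)] assms by auto
  have ca: "cphi n a a = 0" by (simp add: cphi_def)
  have na: "cp n a m \<noteq> a" "cp n a (m+1) \<noteq> a"
  proof -
    show "cp n a m \<noteq> a"
    proof
      assume "cp n a m = a"
      hence "cphi n a (cp n a m) = 0" using ca by simp
      thus False using cphi_cp[OF assms(1,2), of m] assms by simp
    qed
    show "cp n a (m+1) \<noteq> a"
    proof
      assume "cp n a (m+1) = a"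
      hence "cphi n a (cp n a (m+1)) = 0" using ca by simp
      thus False using cphi_cp[OF assms(1,2), of "m+1"] assms by simp
    qed
  qed
  have e1: "{a, cp n a m} \<in> fanE n a" "{a, cp n a (m+1)} \<in> fanE n a"
    using r na unfolding fanE_def by blast+
  have e2: "{cp n a m, cp n a (m+1)} \<in> fanE n a"
    using cyc_edge_cp[OF assms(1,2,4)] unfolding fanE_def by blast
  have e3: "{cp n a m, a} \<in> fanE n a" "{cp n a (m+1), a} \<in> fanE n a" "{cp n a (m+1), cp n a m} \<in> fanE n a"
    using e1 e2 by (simp_all add: insert_commute)
  show ?thesis unfolding is_clique_def
    using fanCs_sub[OF assms(1,2,4)] e1 e2 e3 by (auto simp: fanCs_def)
qed

lemma clique_sub:
  assumes "1 \<le> a" "a \<le> n" "4 \<le> n" "is_clique {1..n} (fanE n a) S"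
  shows "\<exists>m\<in>{1..n-2}. S \<subseteq> fanCs n a m"
proof (cases "S \<subseteq> {a}")
  case True thus ?thesis using assms(3) by (intro bexI[of _ 1]) (auto simp: fanCs_def)
next
  case False
  then obtain x where x: "x \<in> S" "x \<noteq> a" by auto
  have xV: "x \<in> {1..n}" using x assms(4) by (auto simp: is_clique_def)
  define k where "k = cphi n a x"
  have k: "1 \<le> k" "k < n" "x = cp n a k"
    using cphi_zero[OF assms(1,2) xV] cphi_lt[OF assms(1,2) xV] cp_cphi[OF assms(1,2) xV] x
    unfolding k_def by auto
  show ?thesis
  proof (cases "\<forall>y\<in>S. y \<noteq> a \<longrightarrow> y = x")
    case True
    define m where "m = (if k \<le> n - 2 then k else n - 2)"
    have "x \<in> fanCs n a m" using k unfolding m_def fanCs_def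
      by (cases "k \<le> n - 2") (auto simp: Suc_diff_Suc numeral_2_eq_2 intro: arg_cong[where f="cp n a"])
    hence "S \<subseteq> fanCs n a m" using True by (auto simp: fanCs_def)
    moreover have "m \<in> {1..n-2}" using k assms(3) unfolding m_def by auto
    ultimately show ?thesis by blast
  next
    case False
    then obtain y where y: "y \<in> S" "y \<noteq> a" "y \<noteq> x" by blast
    have yV: "y \<in> {1..n}" using y assms(4) by (auto simp: is_clique_def)
    define l where "l = cphi n a y"
    have l: "1 \<le> l" "l < n" "y = cp n a l"
      using cphi_zero[OF assms(1,2) yV] cphi_lt[OF assms(1,2) yV] cp_cphi[OF assms(1,2) yV] y
      unfolding l_def by auto
    have kl: "l = k + 1 \<or> k = l + 1" using clique_phi[OF assms(1,2,4) x(1) y(1) x(2) y(2)] y(3)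
      unfolding k_def l_def by auto
    define m where "m = min k l"
    have Sz: "S \<subseteq> {a, x, y}"
    proof
      fix z assume z: "z \<in> S"
      show "z \<in> {a, x, y}"
      proof (rule ccontr)
        assume nz: "z \<notin> {a, x, y}"
        have "cphi n a z = cphi n a x + 1 \<or> cphi n a x = cphi n a z + 1"
          using clique_phi[OF assms(1,2,4) x(1) z] x nz by auto
        moreover have "cphi n a z = cphi n a y + 1 \<or> cphi n a y = cphi n a z + 1"
          using clique_phi[OF assms(1,2,4) y(1) z] y nz by auto
        ultimately show False using kl unfolding k_def l_def by auto
      qed
    qed
    have "{x, y} = {cp n a m, cp n a (m + 1)}" using kl k l unfolding m_def by auto
    hence "S \<subseteq> fanCs n a m" using Sz unfolding fanCs_def by auto
    moreover have "m \<in> {1..n-2}" using k l kl unfolding m_def by auto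
    ultimately show ?thesis by blast
  qed
qed

lemma fanCs_max:
  assumes "1 \<le> a" "a \<le> n" "4 \<le> n" "m \<in> {1..n-2}"
  shows "maximal_clique {1..n} (fanE n a) (fanCs n a m)"
  unfolding maximal_clique_def
proof (intro conjI allI impI)
  show cl: "is_clique {1..n} (fanE n a) (fanCs n a m)" using fanCs_clique[OF assms(1,2)] assms(3,4) by auto
  fix T assume T: "is_clique {1..n} (fanE n a) T \<and> fanCs n a m \<subseteq> T"
  then obtain m' where m': "m' \<in> {1..n-2}" "T \<subseteq> fanCs n a m'" using clique_sub[OF assms(1-3)] by blast
  have "cphi n a ` fanCs n a m \<subseteq> cphi n a ` fanCs n a m'" using T m'(2) by (intro image_mono) auto
  hence "{0, m, m+1} \<subseteq> {0, m', m'+1}" using fanCs_phi[OF assms(1,2)] assms(3,4) m'(1) by auto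
  hence "m = m'" using assms(4) m'(1) by auto
  thus "T = fanCs n a m" using T m' by auto
qed

lemma fan_maxcliques:
  assumes "1 \<le> a" "a \<le> n" "4 \<le> n"
  shows "fanCs n a ` {1..n-2} = {S. maximal_clique {1..n} (fanE n a) S}"
proof
  show "fanCs n a ` {1..n-2} \<subseteq> {S. maximal_clique {1..n} (fanE n a) S}"
    using fanCs_max[OF assms] by auto
  show "{S. maximal_clique {1..n} (fanE n a) S} \<subseteq> fanCs n a ` {1..n-2}"
  proof
    fix S assume "S \<in> {S. maximal_clique {1..n} (fanE n a) S}"
    hence S: "maximal_clique {1..n} (fanE n a) S" by simp
    have Sc: "is_clique {1..n} (fanE n a) S" and Sm: "\<forall>T. is_clique {1..n} (fanE n a) T \<and> S \<subseteq> T \<longrightarrow> T = S"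
      using S by (simp_all add: maximal_clique_def)
    obtain m where m: "m \<in> {1..n-2}" "S \<subseteq> fanCs n a m"
      using clique_sub[OF assms Sc] by blast
    have "is_clique {1..n} (fanE n a) (fanCs n a m)"
      using fanCs_max[OF assms m(1)] by (simp add: maximal_clique_def)
    hence "fanCs n a m = S" using Sm m(2) by blast
    thus "S \<in> fanCs n a ` {1..n-2}" using m by blast
  qed
qed



lemma fan_chordal:
  assumes a: "1 \<le> a" "a \<le> n" and n4: "4 \<le> n"
  shows "chordal {1..n} (fanE n a)"
  unfolding chordal_def
proof (intro allI impI)
  fix vs assume h: "is_cycle {1..n} (fanE n a) vs \<and> 4 \<le> length vs"
  define L where "L = length vs"
  have L4: "4 \<le> L" using h L_def by simp
  have dist: "distinct vs" and sV: "set vs \<subseteq> {1..n}"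
    and ed: "\<And>i. i < L \<Longrightarrow> {vs ! i, vs ! ((i + 1) mod L)} \<in> fanE n a"
    using h unfolding is_cycle_def L_def by auto
  show "\<exists>i j. i < length vs \<and> j < length vs \<and> i \<noteq> j \<and> j \<noteq> (i + 1) mod length vs \<and>
          i \<noteq> (j + 1) mod length vs \<and> {vs ! i, vs ! j} \<in> fanE n a"
  proof (cases "a \<in> set vs")
    case True
    then obtain i where i: "i < L" "vs ! i = a" unfolding L_def by (auto simp: in_set_conv_nth)
    define j where "j = (i + 2) mod L"
    have j: "j < L" unfolding j_def using L4 by simp
    have ij: "i \<noteq> j \<and> j \<noteq> (i + 1) mod L \<and> i \<noteq> (j + 1) mod L"
    proof -
      consider "i + 3 < L" | "i + 3 = L" | "i + 2 = L" | "i + 1 = L" using i(1) by linarith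
      thus ?thesis
      proof cases
        case 1 thus ?thesis unfolding j_def by simp
      next
        case 2
        hence jj: "j = i + 2" unfolding j_def by simp
        hence "j + 1 = L" using 2 by simp
        hence "(j + 1) mod L = 0" by simp
        thus ?thesis using jj 2 L4 by auto
      next
        case 3 thus ?thesis unfolding j_def using L4 by auto
      next
        case 4
        hence "j = 1" unfolding j_def using L4 by (simp add: mod_if)
        thus ?thesis using 4 L4 by (simp add: mod_if)
      qed
    qed
    have "vs ! j \<in> set vs" using j unfolding L_def by simp
    hence vj1: "vs ! j \<in> {1..n}" using sV by blast
    have vj: "vs ! j \<in> {1..n}" "vs ! j \<noteq> a"
      using vj1 j i ij dist unfolding L_def by (auto simp: nth_eq_iff_index_eq)
    have "{vs ! i, vs ! j} \<in> fanE n a" using vj i unfolding fanE_def by blast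
    thus ?thesis using i j ij unfolding L_def by blast
  next
    case False
    have ne: "set vs \<noteq> {}" using L4 L_def by auto
    let ?P = "cphi n a ` set vs"
    have "Max ?P \<in> ?P" using ne by (intro Max_in) auto
    then obtain v where v: "v \<in> set vs" "cphi n a v = Max ?P" by auto
    have maxle: "\<And>w. w \<in> set vs \<Longrightarrow> cphi n a w \<le> cphi n a v" using v by simp
    obtain i where i: "i < L" "vs ! i = v" using v(1) unfolding L_def by (auto simp: in_set_conv_nth)
    define i1 where "i1 = (if i + 1 = L then 0 else i + 1)"
    define i0 where "i0 = (if i = 0 then L - 1 else i - 1)"
    have i1: "i1 < L" "(i + 1) mod L = i1" unfolding i1_def using i L4 by auto
    have i0: "i0 < L" "(i0 + 1) mod L = i" unfolding i0_def using i L4 by auto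
    have i01: "i0 \<noteq> i1" unfolding i0_def i1_def using i L4 by auto
    have nth_set: "\<And>k. k < L \<Longrightarrow> vs ! k \<in> set vs" unfolding L_def by simp
    have nota: "\<And>k. k < L \<Longrightarrow> vs ! k \<noteq> a" using False nth_set by metis
    have e1: "{vs ! i, vs ! i1} \<in> fanE n a" using ed[OF i(1)] i1 by simp
    have e0: "{vs ! i0, vs ! i} \<in> fanE n a" using ed[OF i0(1)] i0 by simp
    note f1 = fan_edge[OF a e1 nota[OF i(1)] nota[OF i1(1)]]
    note f0 = fan_edge[OF a e0 nota[OF i0(1)] nota[OF i(1)]]
    have m1: "cphi n a (vs ! i1) \<le> cphi n a v" using maxle nth_set i1 by blast
    have m0: "cphi n a (vs ! i0) \<le> cphi n a v" using maxle nth_set i0 by blast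
    have "cphi n a (vs ! i1) = cphi n a (vs ! i0)" using f1 f0 m1 m0 i by auto
    hence "cp n a (cphi n a (vs ! i1)) = cp n a (cphi n a (vs ! i0))" by simp
    hence "vs ! i1 = vs ! i0" using cp_cphi[OF a] f1 f0 by simp
    hence "i1 = i0" using dist i0 i1 unfolding L_def by (simp add: nth_eq_iff_index_eq)
    thus ?thesis using i01 by simp
  qed
qed



lemma cphi_a: "cphi n a a = 0" by (simp add: cphi_def)

lemma cycle_C:
  assumes n4: "4 \<le> n" and C: "maximal_clique {1..n} (cycle_edges n) C"
  shows "\<exists>a. 1 \<le> a \<and> a \<le> n \<and> C = {a, cp n a 1}"
proof -
  have Cc: "is_clique {1..n} (cycle_edges n) C"
    and Cm: "\<forall>T. is_clique {1..n} (cycle_edges n) T \<and> C \<subseteq> T \<longrightarrow> T = C"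
    using C by (simp_all add: maximal_clique_def)
  have "C \<noteq> {}"
  proof
    assume "C = {}"
    moreover have "is_clique {1..n} (cycle_edges n) {1}" using n4 by (simp add: is_clique_def)
    ultimately show False using Cm by blast
  qed
  then obtain x where x: "x \<in> C" by blast
  have xV: "x \<in> {1..n}" using x Cc by (auto simp: is_clique_def)
  have "\<exists>y\<in>C. y \<noteq> x"
  proof (rule ccontr)
    assume "\<not> (\<exists>y\<in>C. y \<noteq> x)"
    hence Cx: "C \<subseteq> {x}" by blast
    have x1: "1 \<le> x" "x \<le> n" using xV by auto
    have e: "{x, cp n x 1} \<in> cycle_edges n" using cyc_edge_cp[OF x1, of 0] n4 cp_0(1)[OF x1(2)] by simp
    have e': "{cp n x 1, x} \<in> cycle_edges n" using e by (simp add: insert_commute)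
    have r: "cp n x 1 \<in> {1..n}" using cp_range[OF x1, of 1] n4 by simp
    have ne: "cp n x 1 \<noteq> x" using cphi_cp[OF x1, of 1] n4 cphi_a[of n x] by auto
    have "is_clique {1..n} (cycle_edges n) {x, cp n x 1}"
      unfolding is_clique_def using xV r e e' by auto
    hence "{x, cp n x 1} = C" using Cm Cx by blast
    thus False using Cx ne by auto
  qed
  then obtain y where y: "y \<in> C" "y \<noteq> x" by (elim bexE)
  have Cpair: "\<And>u v. u \<in> C \<Longrightarrow> v \<in> C \<Longrightarrow> u \<noteq> v \<Longrightarrow> {u, v} \<in> cycle_edges n"
    using Cc unfolding is_clique_def by simp
  have "{x, y} \<in> cycle_edges n" using Cpair x y by simp
  then consider i where "1 \<le> i" "i < n" "{x, y} = {i, i + 1}" | "{x, y} = {n, 1}"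
    unfolding cycle_edges_def by blast
  then obtain a where a: "1 \<le> a" "a \<le> n" "a \<in> C" "cp n a 1 \<in> C"
  proof cases
    case 1
    hence "cp n i 1 = i + 1" by (simp add: cp_def)
    moreover have "i \<in> C" "i + 1 \<in> C" using 1 x y by (auto simp: doubleton_eq_iff)
    ultimately show ?thesis using that[of i] 1 by auto
  next
    case 2
    hence "cp n n 1 = 1" by (simp add: cp_def)
    moreover have "n \<in> C" "1 \<in> C" using 2 x y by (auto simp: doubleton_eq_iff)
    ultimately show ?thesis using that[of n] n4 by auto
  qed
  have "C \<subseteq> {a, cp n a 1}"
  proof
    fix z assume z: "z \<in> C"
    show "z \<in> {a, cp n a 1}"
    proof (rule ccontr)
      assume nz: "z \<notin> {a, cp n a 1}"
      have e1: "{a, z} \<in> cycle_edges n" using Cpair a z nz by simp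
      have e2: "{cp n a 1, z} \<in> cycle_edges n" using Cpair a z nz by simp
      note c1 = cyc_edge[OF a(1,2) e1]
      note c2 = cyc_edge[OF a(1,2) e2]
      have p1: "cphi n a (cp n a 1) = 1" using cphi_cp[OF a(1,2), of 1] n4 by simp
      have zV: "z \<in> {1..n}" using c1 by simp
      have z0: "cphi n a z \<noteq> 0" using cphi_zero[OF a(1,2) zV] nz by auto
      have z1: "cphi n a z \<noteq> 1" using cp_cphi[OF a(1,2) zV] nz by force
      show False using c1 c2 cphi_a[of n a] p1 z0 z1 n4 by auto
    qed
  qed
  thus ?thesis using a by blast
qed

lemma phi_mem:
  assumes "1 \<le> a" "a \<le> n" "m + 1 < n" "z \<in> fanCs n a m"
  shows "cphi n a z \<in> {0, m, m + 1}"
  using fanCs_phi[OF assms(1-3)] assms(4) by blast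

lemma part2:
  assumes n4: "4 \<le> n" and C: "maximal_clique {1..n} (cycle_edges n) C"
  shows "\<exists>E' Cs M. chordal_extension {1..n} (cycle_edges n) E' \<and>
               perfect_sequence {1..n} E' Cs M \<and> C \<subseteq> Cs 1 \<and> M = n - 2 \<and>
               (\<forall>m \<in> {1..M}. card (Cs m) = 3 \<and> card (res_set Cs C m) = 1) \<and>
               (\<forall>K ds. procedure_setting {1..n} (cycle_edges n) K C E' Cs M ds \<longrightarrow>
                   real (op_count Cs C M ds K) \<le> 36 * real n)"
proof -
  obtain a where a: "1 \<le> a" "a \<le> n" and Ca: "C = {a, cp n a 1}" using cycle_C[OF n4 C] by blast
  let ?E = "fanE n a" and ?Cs = "fanCs n a" and ?M = "n - 2"
  have phicp: "\<And>k. k < n \<Longrightarrow> cphi n a (cp n a k) = k" using cphi_cp[OF a] by blast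
  have ga: "is_graph {1..n} ?E"
    unfolding is_graph_def
  proof (intro conjI ballI)
    show "finite {1..n}" by simp
    fix e assume "e \<in> ?E"
    then consider (c1) i where "1 \<le> i" "i < n" "e = {i, i + 1}" | (c2) "e = {n, 1}"
      | (c3) v where "v \<in> {1..n}" "v \<noteq> a" "e = {a, v}"
      unfolding fanE_def cycle_edges_def by blast
    thus "\<exists>x y. x \<noteq> y \<and> x \<in> {1..n} \<and> y \<in> {1..n} \<and> e = {x, y}"
    proof cases
      case c1 thus ?thesis by (intro exI[of _ i] exI[of _ "i+1"]) auto
    next
      case c2 thus ?thesis using n4 by (intro exI[of _ n] exI[of _ 1]) auto
    next
      case c3 thus ?thesis using a by (intro exI[of _ a] exI[of _ v]) auto
    qed
  qed
  have sub: "cycle_edges n \<subseteq> ?E" unfolding fanE_def by (rule Un_upper1)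
  have ce: "chordal_extension {1..n} (cycle_edges n) ?E"
    unfolding chordal_extension_def using ga sub fan_chordal[OF a n4] by simp
  have inj: "inj_on ?Cs {1..?M}"
  proof (rule inj_onI)
    fix m m' assume m: "m \<in> {1..?M}" "m' \<in> {1..?M}" "?Cs m = ?Cs m'"
    have lt: "m + 1 < n" "m' + 1 < n" "1 \<le> m" "1 \<le> m'" using m n4 by auto
    have "{0, m, m+1} = {0, m', m'+1}" using fanCs_phi[OF a lt(1)] fanCs_phi[OF a lt(2)] m(3) by simp
    hence "m + 1 \<in> {0, m', m'+1}" "m' + 1 \<in> {0, m, m+1}" by auto
    thus "m = m'" by auto
  qed
  have notin: "\<And>m j. m \<in> {1..?M} \<Longrightarrow> j < m \<Longrightarrow> cp n a (m + 1) \<notin> ?Cs j"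
  proof
    fix m j assume h: "m \<in> {1..?M}" "j < m" "cp n a (m + 1) \<in> ?Cs j"
    have "cphi n a (cp n a (m + 1)) \<in> {0, j, j + 1}" using phi_mem[OF a _ h(3)] h n4 by auto
    thus False using phicp[of "m+1"] h n4 by auto
  qed
  have perf: "\<forall>m \<in> {2..?M}. \<exists>m' \<in> {1..<m}. ?Cs m' \<supseteq> ?Cs m \<inter> (\<Union>j\<in>{1..<m}. ?Cs j)"
  proof
    fix m assume m: "m \<in> {2..?M}"
    have "?Cs m \<inter> (\<Union>j\<in>{1..<m}. ?Cs j) \<subseteq> ?Cs (m - 1)"
    proof
      fix z assume z: "z \<in> ?Cs m \<inter> (\<Union>j\<in>{1..<m}. ?Cs j)"
      then obtain j where "j \<in> {1..<m}" "z \<in> ?Cs j" by blast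
      hence "z \<noteq> cp n a (m + 1)" using notin[of m j] m by auto
      moreover have "m - 1 + 1 = m" using m by simp
      ultimately show "z \<in> ?Cs (m - 1)" using z unfolding fanCs_def by auto
    qed
    thus "\<exists>m' \<in> {1..<m}. ?Cs m' \<supseteq> ?Cs m \<inter> (\<Union>j\<in>{1..<m}. ?Cs j)" using m by (intro bexI[of _ "m - 1"]) auto
  qed
  have ps: "perfect_sequence {1..n} ?E ?Cs ?M"
    unfolding perfect_sequence_def using inj fan_maxcliques[OF a n4] perf by blast
  have C1: "C \<subseteq> ?Cs 1" using Ca by (auto simp: fanCs_def)
  have cards: "\<forall>m \<in> {1..?M}. card (?Cs m) = 3 \<and> card (res_set ?Cs C m) = 1"
  proof
    fix m assume m: "m \<in> {1..?M}"
    have q: "cphi n a (cp n a m) = m" "cphi n a (cp n a (m+1)) = m+1" using phicp m n4 by auto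
    have d: "a \<noteq> cp n a m" "a \<noteq> cp n a (m+1)" "cp n a m \<noteq> cp n a (m+1)"
    proof -
      show "a \<noteq> cp n a m" using arg_cong[of a "cp n a m" "cphi n a"] q cphi_a[of n a] m by auto
      show "a \<noteq> cp n a (m+1)" using arg_cong[of a "cp n a (m+1)" "cphi n a"] q cphi_a[of n a] by auto
      show "cp n a m \<noteq> cp n a (m+1)" using arg_cong[of "cp n a m" "cp n a (m+1)" "cphi n a"] q by auto
    qed
    have c3: "card (?Cs m) = 3" using d by (simp add: fanCs_def)
    have "res_set ?Cs C m = {cp n a (m + 1)}"
    proof (cases "m = 1")
      case True
      thus ?thesis using d Ca by (auto simp: res_set_def fanCs_def)
    next
      case False
      have "cp n a (m+1) \<notin> sep_set ?Cs m" using notin[OF m] by (auto simp: sep_set_def)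
      moreover have "a \<in> sep_set ?Cs m" using False m by (auto simp: sep_set_def fanCs_def)
      moreover have "cp n a m \<in> sep_set ?Cs m"
      proof -
        have "m - 1 + 1 = m" using m by simp
        hence "cp n a m \<in> ?Cs (m - 1)" unfolding fanCs_def by (metis insertCI)
        moreover have "m - 1 \<in> {1..<m}" using False m by auto
        moreover have "cp n a m \<in> ?Cs m" by (simp add: fanCs_def)
        ultimately show ?thesis unfolding sep_set_def by blast
      qed
      ultimately show ?thesis using False by (auto simp: res_set_def fanCs_def)
    qed
    thus "card (?Cs m) = 3 \<and> card (res_set ?Cs C m) = 1" using c3 by simp
  qed
  have ops: "\<forall>K ds. procedure_setting {1..n} (cycle_edges n) K C ?E ?Cs ?M ds \<longrightarrow>
                   real (op_count ?Cs C ?M ds K) \<le> 36 * real n"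
  proof (intro allI impI)
    fix K ds assume "procedure_setting {1..n} (cycle_edges n) K C ?E ?Cs ?M ds"
    hence "real (op_count ?Cs C ?M ds K) \<le> 4 * (\<Sum>m = 1..?M. real (card (res_set ?Cs C m) * card (?Cs m) ^ 2))"
      by (rule part1)
    also have "(\<Sum>m = 1..?M. real (card (res_set ?Cs C m) * card (?Cs m) ^ 2)) = (\<Sum>m = 1..?M. 9)"
      using cards by (intro sum.cong) auto
    also have "\<dots> = 9 * real ?M" by simp
    finally show "real (op_count ?Cs C ?M ds K) \<le> 36 * real n" using n4 by simp
  qed
  show ?thesis using ce ps C1 cards ops by blast
qed


theorem mainTheorem3:
  shows "(\<exists>c :: real. \<forall>V E K C E' Cs M ds.
            procedure_setting V E K C E' Cs M ds \<longrightarrow>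
            real (op_count Cs C M ds K) \<le>
              c * (\<Sum>m = 1..M. real (card (res_set Cs C m) * card (Cs m) ^ 2)))
       \<and> (\<exists>c :: real. \<forall>n :: nat. \<forall>C. n \<ge> 4 \<and> maximal_clique {1..n} (cycle_edges n) C \<longrightarrow>
            (\<exists>E' Cs M. chordal_extension {1..n} (cycle_edges n) E' \<and>
               perfect_sequence {1..n} E' Cs M \<and> C \<subseteq> Cs 1 \<and> M = n - 2 \<and>
               (\<forall>m \<in> {1..M}. card (Cs m) = 3 \<and> card (res_set Cs C m) = 1) \<and>
               (\<forall>K ds. procedure_setting {1..n} (cycle_edges n) K C E' Cs M ds \<longrightarrow>
                   real (op_count Cs C M ds K) \<le> c * real n)))"
proof (intro conjI)
  show "\<exists>c :: real. \<forall>V E K C E' Cs M ds.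
            procedure_setting V E K C E' Cs M ds \<longrightarrow>
            real (op_count Cs C M ds K) \<le>
              c * (\<Sum>m = 1..M. real (card (res_set Cs C m) * card (Cs m) ^ 2))"
    by (rule exI[of _ 4]) (blast intro: part1)
  show "\<exists>c :: real. \<forall>n :: nat. \<forall>C. n \<ge> 4 \<and> maximal_clique {1..n} (cycle_edges n) C \<longrightarrow>
            (\<exists>E' Cs M. chordal_extension {1..n} (cycle_edges n) E' \<and>
               perfect_sequence {1..n} E' Cs M \<and> C \<subseteq> Cs 1 \<and> M = n - 2 \<and>
               (\<forall>m \<in> {1..M}. card (Cs m) = 3 \<and> card (res_set Cs C m) = 1) \<and>
               (\<forall>K ds. procedure_setting {1..n} (cycle_edges n) K C E' Cs M ds \<longrightarrow>
                   real (op_count Cs C M ds K) \<le> c * real n))"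
  proof (rule exI[of _ 36], intro allI impI)
    fix n :: nat and C assume "n \<ge> 4 \<and> maximal_clique {1..n} (cycle_edges n) C"
    thus "\<exists>E' Cs M. chordal_extension {1..n} (cycle_edges n) E' \<and>
               perfect_sequence {1..n} E' Cs M \<and> C \<subseteq> Cs 1 \<and> M = n - 2 \<and>
               (\<forall>m \<in> {1..M}. card (Cs m) = 3 \<and> card (res_set Cs C m) = 1) \<and>
               (\<forall>K ds. procedure_setting {1..n} (cycle_edges n) K C E' Cs M ds \<longrightarrow>
                   real (op_count Cs C M ds K) \<le> 36 * real n)"
      using part2 by blast
  qed
qed

end
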